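(* Under the standing setup, suppose Assumptions 1 and 2 hold. Then (1) for every $c\in\mathcal C$ and $(w,z)\in S_0$ there is a unique $\xi\in(0,w]$ solving $$u'(\xi,z)=\max\Big\{\mathbb E_z\hat\beta\hat R\,u'\big(c(\hat R(w-\xi)+\hat Y,\hat Z),\hat Z\big),\ u'(w,z)\Big\},$$ so the operator $T$ (with $Tc(w,z):=\xi$) is well defined; $T$ maps $\mathcal C$ into $\mathcal C$ and has a unique fixed point $c^*\in\mathcal C$; and (2) for every $c\in\mathcal C$, $\rho(T^kc,c^* )\to0$ as $k\to\infty$.
   Context: Standing setup. Let $\mathsf Z$ be a finite set and $\{Z_t\}_{t\ge 0}$ a time-homogeneous Markov chain on $\mathsf Z$ with transition probabilities $P(z,\hat z)$. Let $\{\epsilon_t\}_{t\ge1}$ be i.i.d. random elements with common distribution $\pi$, independent of $\{Z_t\}$. Given nonnegative measurable functions $\beta,R,Y$, set $\beta_0=1$ and, for $t\ge1$, $\beta_t=\beta(Z_{t-1},Z_t,\epsilon_t)$, $R_t=R(Z_{t-1},Z_t,\epsilon_t)$, $Y_t=Y(Z_{t-1},Z_t,\epsilon_t)$. Let $u:(0,\infty)\times\mathsf Z\to\mathbb R$ with $u'(c,z)$ its derivative in $c$. $\mathbb E_z$ denotes expectation conditional on $Z_0=z$; under $\mathbb E_z$, $\hat Z=Z_1$, $\hat\beta=\beta(z,\hat Z,\hat\epsilon)$, $\hat R=R(z,\hat Z,\hat\epsilon)$, $\hat Y=Y(z,\hat Z,\hat\epsilon)$, $\hat\epsilon=\epsilon_1$.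 $S_0=(0,\infty)\times\mathsf Z$. Assumption 1: for every $z$, $u(\cdot,z)$ is twice differentiable on $(0,\infty)$, $u'(\cdot,z)>0$, $u''(\cdot,z)<0$, $u'(c,z)\to\infty$ as $c\to0$, and $\lim_{c\to\infty}u'(c,z)<1$. Assumption 2: (a) for all $z$, $\mathbb E_zu'(\hat Y,\hat Z)<\infty$ and $\mathbb E_z\hat\beta\hat R\,u'(\hat Y,\hat Z)<\infty$; (b) $r(K(1))<1$, where $r$ denotes spectral radius and $K(\theta)$ is the $\mathsf Z\times\mathsf Z$ matrix $K_{z\hat z}(\theta)=P(z,\hat z)\int\beta(z,\hat z,\epsilon)R(z,\hat z,\epsilon)^\theta\,\pi(d\epsilon)$. $\mathcal C$ is the set of continuous $c:S_0\to\mathbb R_+$ such that $w\mapsto c(w,z)$ is increasing for each $z$, $0<c(w,z)\le w$, and $\sup_{(w,z)\in S_0}|u'(c(w,z),z)-u'(w,z)|<\infty$. On $\mathcal C$, $\rho(c_1,c_2)=\sup_{(w,z)\in S_0}|u'(c_1(w,z),z)-u'(c_2(w,z),z)|$. *)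

theory Defs
  imports "HOL-Probability.Probability"
begin

definition spectral_radius :: "complex^'n^'n \<Rightarrow> real" where
  "spectral_radius A = Sup {cmod l | l. \<exists>v. v \<noteq> 0 \<and> A *v v = l *s v}"

text \<open>Extended marginal utility u'(x,z) in [0,\<infinity>]; u'(x,z) = \<infinity> for x \<le> 0
  (consistent with u'(c,z) \<rightarrow> \<infinity> as c \<rightarrow> 0).\<close>
definition ext_mu :: "(real \<Rightarrow> 'z \<Rightarrow> real) \<Rightarrow> real \<Rightarrow> 'z \<Rightarrow> ennreal" where
  "ext_mu du x z = (if x > 0 then ennreal (du x z) else \<infinity>)"

text \<open>One-step conditional expectation E_z f(Zhat, epsilonhat) for the Markov kernel P and
  the shock distribution pi (nonnegative integrands, value in [0,\<infinity>]).\<close>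
definition cexp :: "('z::finite \<Rightarrow> 'z \<Rightarrow> real) \<Rightarrow> 'e measure \<Rightarrow> 'z \<Rightarrow> ('z \<Rightarrow> 'e \<Rightarrow> ennreal) \<Rightarrow> ennreal" where
  "cexp P pim z f = (\<Sum>zh\<in>UNIV. ennreal (P z zh) * (\<integral>\<^sup>+ e. f zh e \<partial>pim))"

definition Kmat :: "('z::finite \<Rightarrow> 'z \<Rightarrow> real) \<Rightarrow> 'e measure \<Rightarrow> ('z \<Rightarrow> 'z \<Rightarrow> 'e \<Rightarrow> real)
    \<Rightarrow> ('z \<Rightarrow> 'z \<Rightarrow> 'e \<Rightarrow> real) \<Rightarrow> real \<Rightarrow> complex^'z^'z" where
  "Kmat P pim beta R theta = (\<chi> z zh. complex_of_real
      (P z zh * enn2real (\<integral>\<^sup>+ e. ennreal (beta z zh e * R z zh e powr theta) \<partial>pim)))"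

text \<open>The candidate class \<C> (functions are only relevant on S_0 = (0,\<infinity>) \<times> Z).\<close>
definition candC :: "(real \<Rightarrow> 'z \<Rightarrow> real) \<Rightarrow> (real \<Rightarrow> 'z \<Rightarrow> real) set" where
  "candC du = {c. (\<forall>z. continuous_on {0<..} (\<lambda>w. c w z))
      \<and> (\<forall>z. mono_on {0<..} (\<lambda>w. c w z))
      \<and> (\<forall>w z. w > 0 \<longrightarrow> 0 < c w z \<and> c w z \<le> w)
      \<and> (\<exists>M. \<forall>w z. w > 0 \<longrightarrow> \<bar>du (c w z) z - du w z\<bar> \<le> M)}"

definition rho :: "(real \<Rightarrow> 'z \<Rightarrow> real) \<Rightarrow> (real \<Rightarrow> 'z \<Rightarrow> real) \<Rightarrow> (real \<Rightarrow> 'z \<Rightarrow> real) \<Rightarrow> real" where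
  "rho du c1 c2 = (SUP wz \<in> {0<..} \<times> UNIV. \<bar>du (c1 (fst wz) (snd wz)) (snd wz) - du (c2 (fst wz) (snd wz)) (snd wz)\<bar>)"

definition euler_eq :: "('z::finite \<Rightarrow> 'z \<Rightarrow> real) \<Rightarrow> 'e measure
    \<Rightarrow> ('z \<Rightarrow> 'z \<Rightarrow> 'e \<Rightarrow> real) \<Rightarrow> ('z \<Rightarrow> 'z \<Rightarrow> 'e \<Rightarrow> real) \<Rightarrow> ('z \<Rightarrow> 'z \<Rightarrow> 'e \<Rightarrow> real)
    \<Rightarrow> (real \<Rightarrow> 'z \<Rightarrow> real) \<Rightarrow> (real \<Rightarrow> 'z \<Rightarrow> real) \<Rightarrow> real \<Rightarrow> 'z \<Rightarrow> real \<Rightarrow> bool" where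
  "euler_eq P pim beta R Y du c w z xi \<longleftrightarrow>
     ennreal (du xi z) =
       max (cexp P pim z (\<lambda>zh e. ennreal (beta z zh e * R z zh e)
                 * (let x = R z zh e * (w - xi) + Y z zh e
                    in if x > 0 then ennreal (du (c x zh) zh) else \<infinity>)))
           (ennreal (du w z))"

definition Top :: "('z::finite \<Rightarrow> 'z \<Rightarrow> real) \<Rightarrow> 'e measure
    \<Rightarrow> ('z \<Rightarrow> 'z \<Rightarrow> 'e \<Rightarrow> real) \<Rightarrow> ('z \<Rightarrow> 'z \<Rightarrow> 'e \<Rightarrow> real) \<Rightarrow> ('z \<Rightarrow> 'z \<Rightarrow> 'e \<Rightarrow> real)
    \<Rightarrow> (real \<Rightarrow> 'z \<Rightarrow> real) \<Rightarrow> (real \<Rightarrow> 'z \<Rightarrow> real) \<Rightarrow> real \<Rightarrow> 'z \<Rightarrow> real" where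
  "Top P pim beta R Y du c w z = (THE xi. 0 < xi \<and> xi \<le> w \<and> euler_eq P pim beta R Y du c w z xi)"

end

theory Submission
  imports Defs
begin

locale ifp =
  fixes P :: "'z::finite \<Rightarrow> 'z \<Rightarrow> real" and pim :: "'e measure"
    and beta R Y :: "'z \<Rightarrow> 'z \<Rightarrow> 'e \<Rightarrow> real"
    and du ddu :: "real \<Rightarrow> 'z \<Rightarrow> real"
  assumes P_nonneg: "\<And>z zh. P z zh \<ge> 0"
    and beta_meas: "\<And>z zh. beta z zh \<in> borel_measurable pim"
    and R_meas: "\<And>z zh. R z zh \<in> borel_measurable pim"
    and Y_meas: "\<And>z zh. Y z zh \<in> borel_measurable pim"
    and beta_nonneg: "\<And>z zh e. beta z zh e \<ge> 0"
    and R_nonneg: "\<And>z zh e. R z zh e \<ge> 0"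
    and Y_nonneg: "\<And>z zh e. Y z zh e \<ge> 0"
    and du_deriv: "\<And>c z. c > 0 \<Longrightarrow> ((\<lambda>x. du x z) has_real_derivative ddu c z) (at c)"
    and du_pos: "\<And>c z. c > 0 \<Longrightarrow> du c z > 0"
    and ddu_neg: "\<And>c z. c > 0 \<Longrightarrow> ddu c z < 0"
    and du_at0: "\<And>z. filterlim (\<lambda>c. du c z) at_top (at_right 0)"
    and A2a2: "\<And>z. cexp P pim z (\<lambda>zh e. ennreal (beta z zh e * R z zh e) * ext_mu du (Y z zh e) zh) < \<infinity>"
    and K_fin: "\<And>z zh. P z zh > 0 \<Longrightarrow> (\<integral>\<^sup>+ e. ennreal (beta z zh e * R z zh e powr 1) \<partial>pim) < \<infinity>"
begin

lemma du_cont: "x > 0 \<Longrightarrow> isCont (\<lambda>x. du x z) x"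
  using DERIV_isCont[OF du_deriv] by blast

lemma du_cont_on: "continuous_on {0<..} (\<lambda>x. du x z)"
  by (intro continuous_at_imp_continuous_on ballI du_cont) auto

lemma du_less: assumes "0 < a" "a < b" shows "du b z < du a z"
proof -
  have "\<forall>x. a \<le> x \<and> x \<le> b \<longrightarrow> (\<exists>y. ((\<lambda>x. du x z) has_real_derivative y) (at x) \<and> y < 0)"
    using assms du_deriv ddu_neg by (meson less_le_trans)
  then show ?thesis by (intro DERIV_neg_imp_decreasing[OF assms(2)]) blast
qed

lemma du_le: "0 < a \<Longrightarrow> a \<le> b \<Longrightarrow> du b z \<le> du a z"
  using du_less[of a b z] by (cases "a = b") auto

lemma du_le_iff: "0 < a \<Longrightarrow> 0 < b \<Longrightarrow> du a z \<le> du b z \<longleftrightarrow> b \<le> a"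
  using du_less[of a b z] du_less[of b a z] by (metis linorder_not_le order.strict_iff_not du_le)

lemma du_eq_iff: "0 < a \<Longrightarrow> 0 < b \<Longrightarrow> du a z = du b z \<longleftrightarrow> a = b"
  using du_le_iff by (metis order_antisym order_refl)

lemma candC_D:
  assumes "c \<in> candC du"
  shows "continuous_on {0<..} (\<lambda>w. c w z)" "mono_on {0<..} (\<lambda>w. c w z)"
    "w > 0 \<Longrightarrow> 0 < c w z" "w > 0 \<Longrightarrow> c w z \<le> w"
    "\<exists>M. \<forall>w z. w > 0 \<longrightarrow> \<bar>du (c w z) z - du w z\<bar> \<le> M"
  using assms unfolding candC_def by auto

lemma candC_mono: "c \<in> candC du \<Longrightarrow> 0 < x \<Longrightarrow> x \<le> y \<Longrightarrow> c x z \<le> c y z"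
  using candC_D(2)[of c z] by (auto simp: mono_on_def)

lemma id_candC: "(\<lambda>x z. x) \<in> candC du"
  unfolding candC_def by (auto simp: mono_on_def intro: continuous_on_id)

definition gf :: "(real \<Rightarrow> 'z \<Rightarrow> real) \<Rightarrow> 'z \<Rightarrow> real \<Rightarrow> ennreal" where
  "gf c zh x = (if x > 0 then ennreal (du (c x zh) zh) else \<infinity>)"

definition HH :: "(real \<Rightarrow> 'z \<Rightarrow> real) \<Rightarrow> 'z \<Rightarrow> real \<Rightarrow> ennreal" where
  "HH c z s = cexp P pim z (\<lambda>zh e. ennreal (beta z zh e * R z zh e) * gf c zh (R z zh e * s + Y z zh e))"

lemma euler_eq_HH:
  "euler_eq P pim beta R Y du c w z xi \<longleftrightarrow> ennreal (du xi z) = max (HH c z (w - xi)) (ennreal (du w z))"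
  unfolding euler_eq_def HH_def gf_def Let_def by simp

lemma ext_mu_gf: "ext_mu du x zh = gf (\<lambda>x z. x) zh x"
  unfolding ext_mu_def gf_def by simp

lemma duc_cont_on: "c \<in> candC du \<Longrightarrow> continuous_on {0<..} (\<lambda>x. du (c x zh) zh)"
  apply (rule continuous_on_compose2[OF du_cont_on candC_D(1)])
  using candC_D(3) by auto

lemma gf_meas: assumes "c \<in> candC du" shows "gf c zh \<in> borel_measurable borel"
proof -
  have "gf c zh = (\<lambda>x. if x \<in> {0<..} then ennreal (du (c x zh) zh) else \<infinity>)"
    unfolding gf_def by auto
  also have "\<dots> \<in> borel_measurable borel"
    by (rule borel_measurable_continuous_on_if) (auto intro!: continuous_on_ennreal duc_cont_on assms continuous_on_const)
  finally show ?thesis .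
qed

lemma integrand_meas: assumes "c \<in> candC du"
  shows "(\<lambda>e. ennreal (beta z zh e * R z zh e) * gf c zh (R z zh e * s + Y z zh e)) \<in> borel_measurable pim"
proof -
  have m1: "(\<lambda>e. R z zh e * s + Y z zh e) \<in> borel_measurable pim"
    using R_meas Y_meas by measurable
  have g: "(\<lambda>e. gf c zh (R z zh e * s + Y z zh e)) \<in> borel_measurable pim"
    using measurable_compose[OF m1 gf_meas[OF assms]] by simp
  have a: "(\<lambda>e. ennreal (beta z zh e * R z zh e)) \<in> borel_measurable pim"
    using beta_meas R_meas by measurable
  show ?thesis by (rule borel_measurable_times_ennreal[OF a g])
qed

lemma a_meas: "(\<lambda>e. ennreal (beta z zh e * R z zh e)) \<in> borel_measurable pim"
  using beta_meas R_meas by measurable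

lemma gf_antimono: assumes "c \<in> candC du" "0 \<le> x" "x \<le> y" shows "gf c zh y \<le> gf c zh x"
proof (cases "x > 0")
  case True
  then have "0 < c x zh" "c x zh \<le> c y zh" using candC_D(3)[OF assms(1)] candC_mono[OF assms(1)] assms by auto
  then have "du (c y zh) zh \<le> du (c x zh) zh" by (rule du_le)
  then show ?thesis using True assms unfolding gf_def by (auto intro: ennreal_leI)
next
  case False
  then show ?thesis unfolding gf_def by auto
qed

lemma gf_diff:
  assumes "d \<in> candC du" "D \<ge> 0" "\<And>x. x > 0 \<Longrightarrow> du (c x zh) zh \<le> du (d x zh) zh + D"
  shows "gf c zh x \<le> gf d zh x + ennreal D"
proof (cases "x > 0")
  case True
  have "ennreal (du (c x zh) zh) \<le> ennreal (du (d x zh) zh + D)" using assms True by (auto intro: ennreal_leI)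
  also have "\<dots> = ennreal (du (d x zh) zh) + ennreal D"
    using True candC_D(3)[OF assms(1)] du_pos assms(2) by (intro ennreal_plus) (auto intro: less_imp_le)
  finally show ?thesis using True unfolding gf_def by simp
qed (auto simp: gf_def)

lemma cexp_mono: "(\<And>zh e. f zh e \<le> g zh e) \<Longrightarrow> cexp P pim z f \<le> cexp P pim z g"
  unfolding cexp_def by (intro sum_mono mult_left_mono nn_integral_mono) auto

lemma cexp_add:
  assumes "\<And>zh. f zh \<in> borel_measurable pim" "\<And>zh. g zh \<in> borel_measurable pim"
  shows "cexp P pim z (\<lambda>zh e. f zh e + g zh e) = cexp P pim z f + cexp P pim z g"
  unfolding cexp_def using assms by (simp add: nn_integral_add distrib_left sum.distrib)

definition Kr :: "'z \<Rightarrow> 'z \<Rightarrow> real" where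
  "Kr z zh = P z zh * enn2real (\<integral>\<^sup>+ e. ennreal (beta z zh e * R z zh e powr 1) \<partial>pim)"

lemma powr1: "R z zh e powr 1 = R z zh e"
  using R_nonneg[of z zh e] by (cases "R z zh e = 0") auto

lemma Kr_nonneg: "Kr z zh \<ge> 0"
  unfolding Kr_def using P_nonneg by (simp add: enn2real_nonneg)

lemma Kr_eq: "ennreal (P z zh) * (\<integral>\<^sup>+ e. ennreal (beta z zh e * R z zh e) \<partial>pim) = ennreal (Kr z zh)"
proof (cases "P z zh = 0")
  case False
  define I where "I = (\<integral>\<^sup>+ e. ennreal (beta z zh e * R z zh e) \<partial>pim)"
  have "P z zh > 0" using False P_nonneg[of z zh] by auto
  from K_fin[OF this] have "I < \<infinity>" unfolding I_def by (simp only: powr1)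
  then have I: "I = ennreal (enn2real I)" by (simp add: less_top)
  have "ennreal (P z zh) * I = ennreal (P z zh) * ennreal (enn2real I)" by (subst I) (rule refl)
  also have "\<dots> = ennreal (P z zh * enn2real I)" using P_nonneg[of z zh] by (simp add: ennreal_mult enn2real_nonneg)
  finally show ?thesis unfolding Kr_def powr1 I_def .
qed (simp add: Kr_def)

lemma cexp_const:
  assumes "\<And>zh. D zh \<ge> 0"
  shows "cexp P pim z (\<lambda>zh e. ennreal (beta z zh e * R z zh e) * ennreal (D zh)) = ennreal (\<Sum>zh\<in>UNIV. Kr z zh * D zh)"
proof -
  have "cexp P pim z (\<lambda>zh e. ennreal (beta z zh e * R z zh e) * ennreal (D zh))
     = (\<Sum>zh\<in>UNIV. ennreal (Kr z zh) * ennreal (D zh))"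
    unfolding cexp_def
    by (intro sum.cong refl, subst nn_integral_multc[OF a_meas]) (simp add: Kr_eq mult.assoc[symmetric])
  also have "\<dots> = ennreal (\<Sum>zh\<in>UNIV. Kr z zh * D zh)"
    using assms Kr_nonneg by (subst sum_ennreal[symmetric]) (auto simp: ennreal_mult intro!: sum.cong)
  finally show ?thesis .
qed

end

lemma ennreal_max_distrib: "ennreal (max a b) = max (ennreal a) (ennreal b)"
proof (cases "a \<le> b")
  case True then show ?thesis by (simp add: max.absorb2 ennreal_leI)
next
  case False then show ?thesis by (simp add: max.absorb1 ennreal_leI)
qed

context ifp begin

lemma candC_M: assumes "c \<in> candC du"
  obtains M where "M \<ge> 0" "\<And>w z. w > 0 \<Longrightarrow> \<bar>du (c w z) z - du w z\<bar> \<le> M"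
proof -
  from candC_D(5)[OF assms] obtain M where M: "\<forall>w z. w > 0 \<longrightarrow> \<bar>du (c w z) z - du w z\<bar> \<le> M" by blast
  then have "M \<ge> 0" using abs_ge_zero order_trans zero_less_one by blast
  with M that show ?thesis by blast
qed

lemma gf_bound: assumes "c \<in> candC du" "M \<ge> 0" "\<And>w z. w > 0 \<Longrightarrow> \<bar>du (c w z) z - du w z\<bar> \<le> M"
  shows "gf c zh x \<le> gf (\<lambda>x z. x) zh x + ennreal M"
  by (rule gf_diff[OF id_candC assms(2)]) (smt (verit) assms(3))

lemma cexp_a_fin: "M \<ge> 0 \<Longrightarrow> cexp P pim z (\<lambda>zh e. ennreal (beta z zh e * R z zh e) * ennreal M) < \<infinity>"
  using cexp_const[of "\<lambda>_. M" z] by simp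

lemma HH_fin0: assumes c: "c \<in> candC du" shows "HH c z 0 < \<infinity>"
proof -
  obtain M where M: "M \<ge> 0" "\<And>w z. w > 0 \<Longrightarrow> \<bar>du (c w z) z - du w z\<bar> \<le> M" using candC_M[OF c] by blast
  have "HH c z 0 \<le> cexp P pim z (\<lambda>zh e. ennreal (beta z zh e * R z zh e) * gf (\<lambda>x z. x) zh (Y z zh e)
        + ennreal (beta z zh e * R z zh e) * ennreal M)"
    unfolding HH_def by (rule cexp_mono) (auto simp: distrib_left[symmetric] intro!: mult_left_mono gf_bound[OF c M])
  also have "\<dots> = cexp P pim z (\<lambda>zh e. ennreal (beta z zh e * R z zh e) * gf (\<lambda>x z. x) zh (Y z zh e))
        + cexp P pim z (\<lambda>zh e. ennreal (beta z zh e * R z zh e) * ennreal M)"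
    using integrand_meas[OF id_candC, of z _ 0] a_meas
    by (intro cexp_add) (auto intro: borel_measurable_times_ennreal)
  also have "\<dots> < \<infinity>"
    using A2a2[of z] cexp_a_fin[OF M(1), of z] by (simp add: ext_mu_gf)
  finally show ?thesis .
qed

lemma HH_anti: assumes c: "c \<in> candC du" and s: "0 \<le> s1" "s1 \<le> s2" shows "HH c z s2 \<le> HH c z s1"
  unfolding HH_def
proof (rule cexp_mono, rule mult_left_mono, rule gf_antimono[OF c])
  fix zh e
  show "0 \<le> R z zh e * s1 + Y z zh e" using R_nonneg Y_nonneg s by simp
  show "R z zh e * s1 + Y z zh e \<le> R z zh e * s2 + Y z zh e" using R_nonneg s by (simp add: mult_left_mono)
qed simp

lemma HH_fin: "c \<in> candC du \<Longrightarrow> 0 \<le> s \<Longrightarrow> HH c z s < \<infinity>"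
  using HH_anti[of c 0 s z] HH_fin0[of c z] by auto

lemma HH_real: "c \<in> candC du \<Longrightarrow> 0 \<le> s \<Longrightarrow> HH c z s = ennreal (enn2real (HH c z s))"
  using HH_fin by (simp add: less_top)

lemma term_fin: assumes c: "c \<in> candC du" and P: "P z zh > 0"
  shows "(\<integral>\<^sup>+ e. ennreal (beta z zh e * R z zh e) * gf c zh (Y z zh e) \<partial>pim) < \<infinity>"
proof -
  have "HH c z 0 < \<infinity>" by (rule HH_fin0[OF c])
  then have "ennreal (P z zh) * (\<integral>\<^sup>+ e. ennreal (beta z zh e * R z zh e) * gf c zh (Y z zh e) \<partial>pim) < \<infinity>"
    unfolding HH_def cexp_def by (simp add: ennreal_sum_less_top)
  then show ?thesis using P by (auto simp add: ennreal_mult_less_top top.not_eq_extremum)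
qed

lemma gf_tendsto:
  assumes c: "c \<in> candC du" and x: "x \<longlonglongrightarrow> x0" "\<And>n. x n \<ge> 0" "x0 \<ge> 0"
  shows "(\<lambda>n. gf c zh (x n)) \<longlonglongrightarrow> gf c zh x0"
proof (cases "x0 > 0")
  case True
  have ev: "eventually (\<lambda>n. x n \<in> {0<..}) sequentially"
    using order_tendstoD(1)[OF x(1) True] by simp
  have "(\<lambda>n. du (c (x n) zh) zh) \<longlonglongrightarrow> du (c x0 zh) zh"
    by (rule continuous_on_tendsto_compose[OF duc_cont_on[OF c] x(1)]) (use True ev in auto)
  then have "(\<lambda>n. ennreal (du (c (x n) zh) zh)) \<longlonglongrightarrow> ennreal (du (c x0 zh) zh)"
    by (rule tendsto_ennrealI)
  moreover have "eventually (\<lambda>n. ennreal (du (c (x n) zh) zh) = gf c zh (x n)) sequentially"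
    using ev by eventually_elim (auto simp: gf_def)
  ultimately show ?thesis using True unfolding gf_def[of c zh x0] by (auto intro: Lim_transform_eventually)
next
  case False
  then have x00: "x0 = 0" using x by auto
  have "gf c zh x0 = top" using False by (simp add: gf_def)
  moreover have "(\<lambda>n. gf c zh (x n)) \<longlonglongrightarrow> top"
    unfolding tendsto_top_iff_ennreal
  proof (intro allI impI)
    fix l :: real assume "l \<ge> 0"
    from du_at0[of zh] have "eventually (\<lambda>y. l < du y zh) (at_right 0)"
      unfolding filterlim_at_top_dense by blast
    then obtain b where b: "b > 0" "\<And>y. y > 0 \<Longrightarrow> y < b \<Longrightarrow> l < du y zh"
      unfolding eventually_at_right_field by blast
    have "eventually (\<lambda>n. x n < b) sequentially" using order_tendstoD(2)[OF x(1)] b x00 by simp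
    then show "eventually (\<lambda>n. ennreal l < gf c zh (x n)) sequentially"
    proof eventually_elim
      case (elim n)
      show ?case
      proof (cases "x n > 0")
        case True
        then have "du (x n) zh \<le> du (c (x n) zh) zh"
          using candC_D(3,4)[OF c] by (intro du_le) auto
        with b(2)[OF True elim] have "l < du (c (x n) zh) zh" by linarith
        then show ?thesis using True \<open>l \<ge> 0\<close> by (simp add: gf_def ennreal_less_iff)
      qed (simp add: gf_def)
    qed
  qed
  ultimately show ?thesis by simp
qed

lemma a_gf_tendsto:
  assumes c: "c \<in> candC du" and x: "x \<longlonglongrightarrow> x0" "\<And>n. x n \<ge> 0" "x0 \<ge> 0"
  shows "(\<lambda>n. ennreal a * gf c zh (x n)) \<longlonglongrightarrow> ennreal a * gf c zh x0"
proof (cases "ennreal a = 0")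
  case True then show ?thesis by simp
next
  case False
  show ?thesis
    by (rule tendsto_mult_ennreal[OF tendsto_const gf_tendsto[OF assms]]) (use False in auto)
qed

lemma HH_tendsto:
  assumes c: "c \<in> candC du" and s: "s \<longlonglongrightarrow> s0" "\<And>n. s n \<ge> 0" "s0 \<ge> 0"
  shows "(\<lambda>n. HH c z (s n)) \<longlonglongrightarrow> HH c z s0"
  unfolding HH_def cexp_def
proof (rule tendsto_sum)
  fix zh
  show "(\<lambda>n. ennreal (P z zh) * (\<integral>\<^sup>+ e. ennreal (beta z zh e * R z zh e) * gf c zh (R z zh e * s n + Y z zh e) \<partial>pim))
    \<longlonglongrightarrow> ennreal (P z zh) * (\<integral>\<^sup>+ e. ennreal (beta z zh e * R z zh e) * gf c zh (R z zh e * s0 + Y z zh e) \<partial>pim)"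
  proof (cases "P z zh = 0")
    case True then show ?thesis by simp
  next
    case False
    then have Pp: "P z zh > 0" using P_nonneg[of z zh] by linarith
    have "(\<lambda>n. (\<integral>\<^sup>+ e. ennreal (beta z zh e * R z zh e) * gf c zh (R z zh e * s n + Y z zh e) \<partial>pim))
      \<longlonglongrightarrow> (\<integral>\<^sup>+ e. ennreal (beta z zh e * R z zh e) * gf c zh (R z zh e * s0 + Y z zh e) \<partial>pim)"
    proof (rule nn_integral_dominated_convergence[where w="\<lambda>e. ennreal (beta z zh e * R z zh e) * gf c zh (Y z zh e)"])
      show "\<And>i. (\<lambda>e. ennreal (beta z zh e * R z zh e) * gf c zh (R z zh e * s i + Y z zh e)) \<in> borel_measurable pim"
        by (rule integrand_meas[OF c])
      show "(\<lambda>e. ennreal (beta z zh e * R z zh e) * gf c zh (R z zh e * s0 + Y z zh e)) \<in> borel_measurable pim"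
        by (rule integrand_meas[OF c])
      show "(\<lambda>e. ennreal (beta z zh e * R z zh e) * gf c zh (Y z zh e)) \<in> borel_measurable pim"
        using integrand_meas[OF c, of z zh 0] by simp
      show "(\<integral>\<^sup>+ e. ennreal (beta z zh e * R z zh e) * gf c zh (Y z zh e) \<partial>pim) < \<infinity>"
        by (rule term_fin[OF c Pp])
      show "AE e in pim. ennreal (beta z zh e * R z zh e) * gf c zh (R z zh e * s j + Y z zh e)
          \<le> ennreal (beta z zh e * R z zh e) * gf c zh (Y z zh e)" for j
        using R_nonneg Y_nonneg s(2) by (intro AE_I2 mult_left_mono gf_antimono[OF c]) auto
      show "AE e in pim. (\<lambda>i. ennreal (beta z zh e * R z zh e) * gf c zh (R z zh e * s i + Y z zh e))
          \<longlonglongrightarrow> ennreal (beta z zh e * R z zh e) * gf c zh (R z zh e * s0 + Y z zh e)"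
        using R_nonneg Y_nonneg s by (intro AE_I2 a_gf_tendsto[OF c] tendsto_intros) auto
    qed
    then show ?thesis by (rule tendsto_mult_ennreal[OF tendsto_const]) (use Pp in auto)
  qed
qed

lemma HHr_cont: assumes c: "c \<in> candC du" shows "continuous_on {0..} (\<lambda>s. enn2real (HH c z s))"
proof (rule continuous_on_sequentiallyI)
  fix u a assume u: "\<forall>n. u n \<in> {0::real..}" "a \<in> {0..}" "u \<longlonglongrightarrow> a"
  have "(\<lambda>n. HH c z (u n)) \<longlonglongrightarrow> ennreal (enn2real (HH c z a))"
    using HH_tendsto[OF c u(3)] u HH_real[OF c, of a z] by auto
  then show "(\<lambda>n. enn2real (HH c z (u n))) \<longlonglongrightarrow> enn2real (HH c z a)"
    by (rule tendsto_enn2real) (simp add: enn2real_nonneg)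
qed

lemma sol_exists: assumes c: "c \<in> candC du" and w: "w > 0"
  shows "\<exists>xi. 0 < xi \<and> xi \<le> w \<and> ennreal (du xi z) = max (HH c z (w - xi)) (ennreal (du w z))"
proof -
  define h where "h xi = max (enn2real (HH c z (w - xi))) (du w z)" for xi
  define B where "B = enn2real (HH c z 0) + du w z + 1"
  have hB: "h xi < B" if "0 < xi" "xi \<le> w" for xi
  proof -
    have "HH c z (w - xi) \<le> HH c z 0" using HH_anti[OF c, of 0 "w - xi" z] that by simp
    then have "enn2real (HH c z (w - xi)) \<le> enn2real (HH c z 0)"
      using HH_fin0[OF c, of z] by (intro enn2real_mono) auto
    moreover have "du w z > 0" using du_pos w by auto
    ultimately show ?thesis unfolding h_def B_def using enn2real_nonneg[of "HH c z 0"] by linarith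
  qed
  from du_at0[of z] have "eventually (\<lambda>y. B < du y z) (at_right 0)"
    unfolding filterlim_at_top_dense by blast
  then obtain b where b: "b > 0" "\<And>y. y > 0 \<Longrightarrow> y < b \<Longrightarrow> B < du y z"
    unfolding eventually_at_right_field by blast
  define x0 where "x0 = min (b/2) w"
  have x0: "0 < x0" "x0 \<le> w" "x0 < b" using b w by (auto simp: x0_def)
  have f0: "du x0 z - h x0 \<ge> 0" using b(2)[OF x0(1) x0(3)] hB[OF x0(1,2)] by linarith
  have fw: "du w z - h w \<le> 0" unfolding h_def by simp
  have cont: "continuous_on {x0..w} (\<lambda>xi. du xi z - h xi)"
    unfolding h_def
  proof (intro continuous_on_diff continuous_on_max continuous_on_const)
    show "continuous_on {x0..w} (\<lambda>xi. du xi z)"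
      by (rule continuous_on_subset[OF du_cont_on]) (use x0 in auto)
    show "continuous_on {x0..w} (\<lambda>xi. enn2real (HH c z (w - xi)))"
      by (rule continuous_on_compose2[OF HHr_cont[OF c]]) (auto intro!: continuous_intros)
  qed
  from IVT2'[of "\<lambda>xi. du xi z - h xi", OF fw f0 x0(2) cont] obtain xi where
    xi: "xi \<ge> x0" "xi \<le> w" "du xi z - h xi = 0" by blast
  have "ennreal (du xi z) = ennreal (h xi)" using xi by simp
  also have "\<dots> = max (HH c z (w - xi)) (ennreal (du w z))"
    unfolding h_def ennreal_max_distrib using HH_real[OF c, of "w - xi" z] xi by simp
  finally have "ennreal (du xi z) = max (HH c z (w - xi)) (ennreal (du w z))" .
  moreover have "0 < xi" using xi x0 by linarith
  ultimately show ?thesis using xi by blast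
qed

lemma sol_less: assumes c: "c \<in> candC du" and "0 < x1" "x1 < x2" "x2 \<le> w"
  and e1: "ennreal (du x1 z) = max (HH c z (w - x1)) (ennreal (du w z))"
  and e2: "ennreal (du x2 z) = max (HH c z (w - x2)) (ennreal (du w z))"
  shows False
proof -
  have "HH c z (w - x1) \<le> HH c z (w - x2)" using HH_anti[OF c, of "w - x2" "w - x1" z] assms by simp
  then have "ennreal (du x1 z) \<le> ennreal (du x2 z)" unfolding e1 e2 by (rule max.mono) simp
  moreover have "du x2 z > 0" using du_pos[of x2 z] assms(2,3) by simp
  ultimately have "du x1 z \<le> du x2 z" using ennreal_le_iff[of "du x2 z" "du x1 z"] by simp
  with du_less[of x1 x2 z] assms show False by simp
qed

lemma Top_ex1: assumes c: "c \<in> candC du" and w: "w > 0"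
  shows "\<exists>!xi. 0 < xi \<and> xi \<le> w \<and> euler_eq P pim beta R Y du c w z xi"
  unfolding euler_eq_HH
proof (rule ex_ex1I)
  show "\<exists>xi. 0 < xi \<and> xi \<le> w \<and> ennreal (du xi z) = max (HH c z (w - xi)) (ennreal (du w z))"
    by (rule sol_exists[OF c w])
next
  fix x y assume "0 < x \<and> x \<le> w \<and> ennreal (du x z) = max (HH c z (w - x)) (ennreal (du w z))"
    "0 < y \<and> y \<le> w \<and> ennreal (du y z) = max (HH c z (w - y)) (ennreal (du w z))"
  then show "x = y" using sol_less[OF c, of x y w z] sol_less[OF c, of y x w z] by (metis linorder_neqE_linordered_idom)
qed

abbreviation T where "T c \<equiv> Top P pim beta R Y du c"

lemma Top_prop: assumes c: "c \<in> candC du" and w: "w > 0"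
  shows "0 < T c w z" "T c w z \<le> w" "ennreal (du (T c w z) z) = max (HH c z (w - T c w z)) (ennreal (du w z))"
  using theI'[OF Top_ex1[OF c w, of z]] unfolding Top_def euler_eq_HH by auto

end

lemma max_eq_gtD: "(x::'a::linorder) = max a b \<Longrightarrow> b < x \<Longrightarrow> x \<le> a"
  by (auto simp: max_def split: if_splits)

context ifp begin

lemma Top_gt: assumes c: "c \<in> candC du" and w: "w > 0" and lt: "T c w z < w"
  shows "ennreal (du (T c w z) z) \<le> HH c z (w - T c w z)"
proof (rule max_eq_gtD[OF Top_prop(3)[OF c w]])
  have "du w z < du (T c w z) z" using du_less Top_prop(1)[OF c w] lt by blast
  then show "ennreal (du w z) < ennreal (du (T c w z) z)" using du_pos[OF w, of z] by (simp add: ennreal_less_iff)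
qed

lemma Top_mono: assumes c: "c \<in> candC du" and w: "0 < w1" "w1 \<le> w2"
  shows "T c w1 z \<le> T c w2 z"
proof (rule ccontr)
  assume "\<not> T c w1 z \<le> T c w2 z"
  then have lt: "T c w2 z < T c w1 z" by simp
  have w2: "w2 > 0" using w by simp
  note p1 = Top_prop[OF c w(1), of z] and p2 = Top_prop[OF c w2, of z]
  have "T c w2 z < w2" using lt p1(2) w by linarith
  from Top_gt[OF c w2 this] have "ennreal (du (T c w2 z) z) \<le> HH c z (w2 - T c w2 z)" .
  also have "\<dots> \<le> HH c z (w1 - T c w1 z)" using p1 lt w by (intro HH_anti[OF c]) auto
  also have "\<dots> \<le> ennreal (du (T c w1 z) z)" unfolding p1(3) by simp
  finally have "du (T c w2 z) z \<le> du (T c w1 z) z" using du_pos[OF p1(1), of z] by (simp add: ennreal_le_iff)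
  with du_less[OF p2(1) lt, of z] show False by simp
qed

lemma Top_sav_mono: assumes c: "c \<in> candC du" and w: "0 < w1" "w1 \<le> w2"
  shows "w1 - T c w1 z \<le> w2 - T c w2 z"
proof (rule ccontr)
  assume "\<not> ?thesis"
  then have lt: "w2 - T c w2 z < w1 - T c w1 z" by simp
  have w2: "w2 > 0" using w by simp
  note p1 = Top_prop[OF c w(1), of z] and p2 = Top_prop[OF c w2, of z]
  have "T c w1 z < w1" using lt p2(2) by linarith
  from Top_gt[OF c w(1) this] have "ennreal (du (T c w1 z) z) \<le> HH c z (w1 - T c w1 z)" .
  also have "\<dots> \<le> HH c z (w2 - T c w2 z)" using p2 lt by (intro HH_anti[OF c]) auto
  also have "\<dots> \<le> ennreal (du (T c w2 z) z)" unfolding p2(3) by simp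
  finally have "du (T c w1 z) z \<le> du (T c w2 z) z" using du_pos[OF p2(1), of z] by (simp add: ennreal_le_iff)
  moreover have "T c w1 z < T c w2 z" using lt w by linarith
  ultimately show False using du_less[OF p1(1), of "T c w2 z" z] by linarith
qed

lemma Top_lip: assumes c: "c \<in> candC du" and w: "0 < w1" "0 < w2"
  shows "\<bar>T c w1 z - T c w2 z\<bar> \<le> \<bar>w1 - w2\<bar>"
proof (cases "w1 \<le> w2")
  case True
  then show ?thesis using Top_mono[OF c w(1) True, of z] Top_sav_mono[OF c w(1) True, of z] by linarith
next
  case False
  then have le: "w2 \<le> w1" by simp
  show ?thesis using Top_mono[OF c w(2) le, of z] Top_sav_mono[OF c w(2) le, of z] by linarith
qed

lemma Top_cont: assumes c: "c \<in> candC du" shows "continuous_on {0<..} (\<lambda>w. T c w z)"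
  unfolding continuous_on_iff
proof (intro ballI allI impI)
  fix x e assume x: "x \<in> {0::real<..}" and e: "(0::real) < e"
  show "\<exists>d>0. \<forall>x'\<in>{0<..}. dist x' x < d \<longrightarrow> dist (T c x' z) (T c x z) < e"
  proof (intro exI[of _ e] conjI ballI impI e)
    fix x' :: real assume x': "x' \<in> {0<..}" "dist x' x < e"
    have "\<bar>T c x' z - T c x z\<bar> \<le> \<bar>x' - x\<bar>" using Top_lip[OF c] x x'(1) by simp
    then show "dist (T c x' z) (T c x z) < e" using x'(2) by (simp add: dist_real_def)
  qed
qed

lemma Top_bound: assumes c: "c \<in> candC du" and w: "w > 0"
  shows "\<bar>du (T c w z) z - du w z\<bar> \<le> (\<Sum>z\<in>UNIV. enn2real (HH c z 0))"
proof -
  note p = Top_prop[OF c w, of z]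
  have ge: "du w z \<le> du (T c w z) z" using p by (intro du_le) auto
  have "ennreal (du (T c w z) z) \<le> HH c z (w - T c w z) + ennreal (du w z)"
    unfolding p(3) by (intro max.boundedI add_increasing2 add_increasing) auto
  also have "\<dots> \<le> HH c z 0 + ennreal (du w z)" using p by (intro add_right_mono HH_anti[OF c]) auto
  also have "\<dots> = ennreal (enn2real (HH c z 0) + du w z)"
    using HH_real[OF c, of 0 z] du_pos[OF w, of z] by (subst ennreal_plus) (auto simp: enn2real_nonneg)
  finally have X: "ennreal (du (T c w z) z) \<le> ennreal (enn2real (HH c z 0) + du w z)" .
  have nn: "0 \<le> enn2real (HH c z 0) + du w z" using du_pos[OF w, of z] enn2real_nonneg[of "HH c z 0"] by linarith
  have "du (T c w z) z \<le> enn2real (HH c z 0) + du w z" using iffD1[OF ennreal_le_iff[OF nn] X] .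
  moreover have "enn2real (HH c z 0) \<le> (\<Sum>z\<in>UNIV. enn2real (HH c z 0))"
    by (rule member_le_sum) (auto simp: enn2real_nonneg)
  ultimately show ?thesis using ge by linarith
qed

lemma Top_candC: assumes c: "c \<in> candC du" shows "T c \<in> candC du"
proof -
  have 1: "\<forall>z. continuous_on {0<..} (\<lambda>w. T c w z)" using Top_cont[OF c] by blast
  have 2: "\<forall>z. mono_on {0<..} (\<lambda>w. T c w z)" using Top_mono[OF c] by (auto intro!: mono_onI)
  have 3: "\<forall>w z. w > 0 \<longrightarrow> 0 < T c w z \<and> T c w z \<le> w" using Top_prop[OF c] by blast
  have 4: "\<exists>M. \<forall>w z. 0 < w \<longrightarrow> \<bar>du (T c w z) z - du w z\<bar> \<le> M"
    using Top_bound[OF c] by blast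
  show ?thesis unfolding candC_def using 1 2 3 4 by blast
qed

lemma Top_local: assumes "\<And>x zh. x > 0 \<Longrightarrow> c x zh = d x zh" shows "T c = T d"
  unfolding Top_def euler_eq_def Let_def by (simp add: assms cong: if_cong)

lemma contr1:
  assumes c: "c \<in> candC du" and d: "d \<in> candC du" and D: "\<And>zh. D zh \<ge> 0"
    and cd: "\<And>x zh. x > 0 \<Longrightarrow> du (c x zh) zh \<le> du (d x zh) zh + D zh" and w: "w > 0"
  shows "du (T c w z) z \<le> du (T d w z) z + (\<Sum>zh\<in>UNIV. Kr z zh * D zh)"
proof (cases "du (T c w z) z \<le> du (T d w z) z")
  case True
  moreover have "(\<Sum>zh\<in>UNIV. Kr z zh * D zh) \<ge> 0" using Kr_nonneg D by (intro sum_nonneg) auto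
  ultimately show ?thesis by linarith
next
  case False
  note p1 = Top_prop[OF c w, of z] and p2 = Top_prop[OF d w, of z]
  have lt: "T c w z < T d w z" using False du_le[OF p2(1), of "T c w z" z] by linarith
  have "ennreal (du (T c w z) z) \<le> HH c z (w - T c w z)"
    using lt p2(2) by (intro Top_gt[OF c w]) auto
  also have "\<dots> \<le> cexp P pim z (\<lambda>zh e. ennreal (beta z zh e * R z zh e) * gf d zh (R z zh e * (w - T c w z) + Y z zh e)
      + ennreal (beta z zh e * R z zh e) * ennreal (D zh))"
    unfolding HH_def
    by (rule cexp_mono) (auto simp: distrib_left[symmetric] intro!: mult_left_mono gf_diff[OF d D cd])
  also have "\<dots> = HH d z (w - T c w z) + ennreal (\<Sum>zh\<in>UNIV. Kr z zh * D zh)"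
    unfolding HH_def cexp_const[OF D, symmetric]
    by (rule cexp_add) (auto intro: integrand_meas[OF d] borel_measurable_times_ennreal a_meas)
  also have "\<dots> \<le> HH d z (w - T d w z) + ennreal (\<Sum>zh\<in>UNIV. Kr z zh * D zh)"
    using lt p2 by (intro add_right_mono HH_anti[OF d]) auto
  also have "\<dots> \<le> ennreal (du (T d w z) z) + ennreal (\<Sum>zh\<in>UNIV. Kr z zh * D zh)"
    unfolding p2(3) by (intro add_right_mono) simp
  also have "\<dots> = ennreal (du (T d w z) z + (\<Sum>zh\<in>UNIV. Kr z zh * D zh))"
    using du_pos[OF p2(1), of z] Kr_nonneg D by (subst ennreal_plus) (auto intro!: sum_nonneg)
  finally show ?thesis
    using du_pos[OF p2(1), of z] Kr_nonneg D by (subst (asm) ennreal_le_iff) (auto intro!: sum_nonneg add_nonneg_nonneg)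
qed

lemma contr:
  assumes c: "c \<in> candC du" and d: "d \<in> candC du" and D: "\<And>zh. D zh \<ge> 0"
    and cd: "\<And>x zh. x > 0 \<Longrightarrow> \<bar>du (c x zh) zh - du (d x zh) zh\<bar> \<le> D zh" and w: "w > 0"
  shows "\<bar>du (T c w z) z - du (T d w z) z\<bar> \<le> (\<Sum>zh\<in>UNIV. Kr z zh * D zh)"
proof -
  have "du (T c w z) z \<le> du (T d w z) z + (\<Sum>zh\<in>UNIV. Kr z zh * D zh)"
    by (rule contr1[OF c d D _ w]) (use cd in \<open>smt (verit)\<close>)
  moreover have "du (T d w z) z \<le> du (T c w z) z + (\<Sum>zh\<in>UNIV. Kr z zh * D zh)"
    by (rule contr1[OF d c D _ w]) (use cd in \<open>smt (verit)\<close>)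
  ultimately show ?thesis by linarith
qed

end

lemma simplex_props:
  defines "S \<equiv> {x::real^'n. (\<forall>i. 0 \<le> x$i) \<and> sum (\<lambda>i. x$i) UNIV = 1}"
  shows "compact S" "convex S" "S \<noteq> {}"
proof -
  have cl: "closed S" unfolding S_def Collect_conj_eq Collect_all_eq
    by (intro closed_Int closed_INT ballI closed_Collect_le closed_Collect_eq continuous_intros continuous_on_component)
  have "norm x \<le> 1" if "x \<in> S" for x
  proof -
    have "norm x \<le> sum (\<lambda>i. \<bar>x$i\<bar>) UNIV" by (rule norm_le_l1_cart)
    also have "\<dots> = 1" using that unfolding S_def by simp
    finally show ?thesis .
  qed
  then have "bounded S" unfolding bounded_iff by blast
  with cl show "compact S" by (simp add: compact_eq_bounded_closed)
  show "convex S" unfolding convex_def S_def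
    by (auto simp: sum.distrib sum_distrib_left[symmetric])
  have "(\<chi> i. 1 / real CARD('n)) \<in> S" unfolding S_def by simp
  then show "S \<noteq> {}" by blast
qed

lemma subinvariant:
  fixes K :: "'n::finite \<Rightarrow> 'n \<Rightarrow> real"
  assumes Kn: "\<And>i j. K i j \<ge> 0"
    and noeig: "\<And>x l. \<forall>i. x i \<ge> 0 \<Longrightarrow> (\<Sum>i\<in>UNIV. x i) = 1 \<Longrightarrow> l \<ge> 1
        \<Longrightarrow> \<forall>i. (\<Sum>j\<in>UNIV. K i j * x j) = l * x i \<Longrightarrow> False"
  shows "\<exists>v th. (\<forall>i. v i > 0) \<and> 0 \<le> th \<and> th < 1 \<and> (\<forall>i. (\<Sum>j\<in>UNIV. K i j * v j) \<le> th * v i)"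
proof (rule ccontr)
  assume H: "\<not> ?thesis"
  define S where "S = {x::real^'n. (\<forall>i. 0 \<le> x$i) \<and> sum (\<lambda>i. x$i) UNIV = 1}"
  note Sp = simplex_props[where 'n='n, folded S_def]
  define N where "N ep x = (\<Sum>i\<in>UNIV. (\<Sum>j\<in>UNIV. K i j * x$j) + ep)" for ep and x :: "real^'n"
  define e where "e n = inverse (real (Suc n))" for n
  have Npos: "N ep x > 0" if "x \<in> S" "ep > 0" for ep x
  proof -
    have "N ep x \<ge> (\<Sum>i\<in>(UNIV::'n set). ep)" unfolding N_def
      using that Kn unfolding S_def by (intro sum_mono) (auto intro!: sum_nonneg)
    moreover have "(\<Sum>i\<in>(UNIV::'n set). ep) > 0" using that by simp
    ultimately show ?thesis by linarith
  qed
  have step: "\<exists>x. x \<in> S \<and> (\<forall>i. (\<Sum>j\<in>UNIV. K i j * x$j) + e n = N (e n) x * x$i) \<and> N (e n) x \<ge> 1" for n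
  proof -
    define ep where "ep = e n"
    have ep: "ep > 0" unfolding ep_def e_def by simp
    define f where "f x = (\<chi> i. ((\<Sum>j\<in>UNIV. K i j * x$j) + ep) / N ep x)" for x :: "real^'n"
    have contf: "continuous_on S f" unfolding f_def
    proof (intro continuous_on_vec_lambda continuous_on_divide)
      fix i show "continuous_on S (\<lambda>x. (\<Sum>j\<in>UNIV. K i j * x$j) + ep)" by (intro continuous_intros)
      show "continuous_on S (\<lambda>x. N ep x)" unfolding N_def by (intro continuous_intros)
      show "\<forall>x\<in>S. N ep x \<noteq> 0" using Npos[OF _ ep] by force
    qed
    have fS: "f \<in> S \<rightarrow> S"
    proof
      fix x assume x: "x \<in> S"
      have nn: "0 \<le> (\<Sum>j\<in>UNIV. K i j * x$j) + ep" for i using x Kn ep unfolding S_def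
        by (intro add_nonneg_nonneg sum_nonneg mult_nonneg_nonneg) auto
      have "sum (\<lambda>i. f x $ i) UNIV = N ep x / N ep x" unfolding f_def N_def by (simp add: sum_divide_distrib[symmetric])
      also have "\<dots> = 1" using Npos[OF x ep] by simp
      finally show "f x \<in> S" unfolding S_def using nn Npos[OF x ep] unfolding f_def by auto
    qed
    obtain x where x: "x \<in> S" "f x = x" by (rule brouwer[OF Sp contf fS])
    have eq: "(\<Sum>j\<in>UNIV. K i j * x$j) + ep = N ep x * x$i" for i
    proof -
      have "x$i = f x $ i" using x(2) by simp
      also have "\<dots> = ((\<Sum>j\<in>UNIV. K i j * x$j) + ep) / N ep x" unfolding f_def by simp
      finally have "x$i = ((\<Sum>j\<in>UNIV. K i j * x$j) + ep) / N ep x" .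
      then show ?thesis using Npos[OF x(1) ep] by (simp add: field_simps)
    qed
    have "N ep x \<ge> 1"
    proof (rule ccontr)
      assume "\<not> N ep x \<ge> 1"
      then have lt: "N ep x < 1" by simp
      have "(\<forall>i. x$i > 0) \<and> 0 \<le> N ep x \<and> N ep x < 1 \<and> (\<forall>i. (\<Sum>j\<in>UNIV. K i j * x$j) \<le> N ep x * x$i)"
      proof (intro conjI allI)
        fix i
        have "0 \<le> (\<Sum>j\<in>UNIV. K i j * x$j)" using x(1) Kn unfolding S_def by (intro sum_nonneg mult_nonneg_nonneg) auto
        then have "N ep x * x$i > 0" using eq[of i] ep by linarith
        then show "x$i > 0" using Npos[OF x(1) ep] by (simp add: zero_less_mult_iff)
        show "(\<Sum>j\<in>UNIV. K i j * x$j) \<le> N ep x * x$i" using eq[of i] ep by linarith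
      qed (use lt Npos[OF x(1) ep] in auto)
      with H show False by blast
    qed
    with x eq show ?thesis unfolding ep_def by blast
  qed
  then obtain X where X: "\<And>n. X n \<in> S" "\<And>n i. (\<Sum>j\<in>UNIV. K i j * X n $ j) + e n = N (e n) (X n) * X n $ i"
    "\<And>n. N (e n) (X n) \<ge> 1"
    by metis
  from compact_imp_seq_compact[OF Sp(1)] X(1) obtain l r where lr: "l \<in> S" "strict_mono r" "(X \<circ> r) \<longlonglongrightarrow> l"
    unfolding seq_compact_def by metis
  have e0: "(\<lambda>n. e (r n)) \<longlonglongrightarrow> 0"
    using LIMSEQ_subseq_LIMSEQ[OF LIMSEQ_inverse_real_of_nat lr(2)] unfolding e_def by (simp add: o_def)
  have Xj: "(\<lambda>n. X (r n) $ j) \<longlonglongrightarrow> l $ j" for j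
    using tendsto_vec_nth[OF lr(3), of j] by (simp add: o_def)
  have KX: "(\<lambda>n. (\<Sum>j\<in>UNIV. K i j * X (r n) $ j) + e (r n)) \<longlonglongrightarrow> (\<Sum>j\<in>UNIV. K i j * l $ j) + 0" for i
    by (intro tendsto_intros Xj e0)
  define Nl where "Nl = (\<Sum>i\<in>UNIV. (\<Sum>j\<in>UNIV. K i j * l $ j) + 0)"
  have NX: "(\<lambda>n. N (e (r n)) (X (r n))) \<longlonglongrightarrow> Nl" unfolding N_def Nl_def
    by (intro tendsto_sum KX)
  have Nl1: "Nl \<ge> 1" using LIMSEQ_le_const[OF NX, of 1] X(3) by blast
  have eqi: "(\<Sum>j\<in>UNIV. K i j * l $ j) = Nl * l $ i" for i
  proof -
    have "(\<lambda>n. N (e (r n)) (X (r n)) * X (r n) $ i) \<longlonglongrightarrow> Nl * l $ i" by (intro tendsto_intros NX Xj)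
    moreover have "(\<lambda>n. N (e (r n)) (X (r n)) * X (r n) $ i) = (\<lambda>n. (\<Sum>j\<in>UNIV. K i j * X (r n) $ j) + e (r n))"
      using X(2) by metis
    ultimately show ?thesis using KX[of i] LIMSEQ_unique by fastforce
  qed
  show False
    by (rule noeig[of "\<lambda>i. l $ i" Nl]) (use lr(1) Nl1 eqi in \<open>auto simp: S_def\<close>)
qed

lemma eig_bound:
  fixes A :: "complex^'n^'n"
  assumes ev: "A *v v = l *s v" and v: "v \<noteq> 0"
  shows "cmod l \<le> (\<Sum>i\<in>UNIV. \<Sum>j\<in>UNIV. cmod (A$i$j))"
proof -
  define m where "m = Max (range (\<lambda>j. cmod (v$j)))"
  have mge: "cmod (v$j) \<le> m" for j unfolding m_def by (rule Max_ge) auto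
  have "m \<in> range (\<lambda>j. cmod (v$j))" unfolding m_def by (rule Max_in) auto
  then obtain i where i: "cmod (v$i) = m" by auto
  from v obtain k where "v$k \<noteq> 0" by (auto simp: vec_eq_iff)
  then have mpos: "m > 0" using mge[of k] by (meson norm_ge_zero norm_le_zero_iff order.strict_iff_not order_trans)
  have "l * v$i = (\<Sum>j\<in>UNIV. A$i$j * v$j)"
    using arg_cong[OF ev, of "\<lambda>x. x $ i"] by (simp add: matrix_vector_mult_def vector_scalar_mult_def)
  then have "cmod l * m = cmod (\<Sum>j\<in>UNIV. A$i$j * v$j)" using i by (metis norm_mult)
  also have "\<dots> \<le> (\<Sum>j\<in>UNIV. cmod (A$i$j) * cmod (v$j))" by (rule order_trans[OF norm_sum]) (simp add: norm_mult)
  also have "\<dots> \<le> (\<Sum>j\<in>UNIV. cmod (A$i$j) * m)" by (intro sum_mono mult_left_mono mge) auto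
  also have "\<dots> = (\<Sum>j\<in>UNIV. cmod (A$i$j)) * m" by (simp add: sum_distrib_right)
  finally have "cmod l \<le> (\<Sum>j\<in>UNIV. cmod (A$i$j))" using mpos by simp
  also have "\<dots> \<le> (\<Sum>i\<in>UNIV. \<Sum>j\<in>UNIV. cmod (A$i$j))"
    by (rule member_le_sum[of i UNIV "\<lambda>i. \<Sum>j\<in>UNIV. cmod (A$i$j)"]) (auto intro: sum_nonneg)
  finally show ?thesis .
qed

lemma noeig_from_sr:
  fixes A :: "complex^'n^'n" and K :: "'n \<Rightarrow> 'n \<Rightarrow> real"
  assumes A: "\<And>i j. A$i$j = complex_of_real (K i j)" and sr: "spectral_radius A < 1"
    and x: "\<forall>i. x i \<ge> 0" "(\<Sum>i\<in>UNIV. x i) = 1" and l: "l \<ge> 1"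
    and eq: "\<forall>i. (\<Sum>j\<in>UNIV. K i j * x j) = l * x i"
  shows False
proof -
  define v where "v = (\<chi> i. complex_of_real (x i))"
  have "v \<noteq> 0"
  proof
    assume "v = 0"
    then have "x i = 0" for i unfolding v_def by (metis (mono_tags) of_real_eq_0_iff vec_lambda_beta zero_index)
    then show False using x(2) by simp
  qed
  moreover have "A *v v = complex_of_real l *s v"
    unfolding vec_eq_iff
  proof
    fix i
    have "(A *v v) $ i = complex_of_real (\<Sum>j\<in>UNIV. K i j * x j)"
      by (simp add: matrix_vector_mult_def v_def A)
    also have "\<dots> = (complex_of_real l *s v) $ i" using eq by (simp add: vector_scalar_mult_def v_def)
    finally show "(A *v v) $ i = (complex_of_real l *s v) $ i" .
  qed
  ultimately have mem: "cmod (complex_of_real l) \<in> {cmod l | l. \<exists>v. v \<noteq> 0 \<and> A *v v = l *s v}" by blast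
  have bdd: "bdd_above {cmod l | l. \<exists>v. v \<noteq> 0 \<and> A *v v = l *s v}"
    unfolding bdd_above_def using eig_bound[of A] by blast
  have "cmod (complex_of_real l) \<le> spectral_radius A"
    unfolding spectral_radius_def by (rule cSup_upper[OF mem bdd])
  then show False using sr l by simp
qed

lemma geom_conv:
  fixes a :: "nat \<Rightarrow> real"
  assumes th: "0 \<le> th" "th < 1" and d: "\<And>n. \<bar>a (Suc n) - a n\<bar> \<le> B * th^n"
  shows "\<exists>L. a \<longlonglongrightarrow> L \<and> (\<forall>n. \<bar>a n - L\<bar> \<le> B * th^n / (1 - th))"
proof -
  define d where "d k = a (Suc k) - a k" for k
  have sg: "summable (\<lambda>k. B * th^k)" using th by (intro summable_mult summable_geometric) auto
  have sd: "summable d"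
  proof (rule summable_comparison_test'[OF sg])
    fix n :: nat show "norm (d n) \<le> B * th ^ n" unfolding d_def real_norm_def by (rule assms(3))
  qed
  define L where "L = a 0 + suminf d"
  have an: "a n = a 0 + (\<Sum>k<n. d k)" for n unfolding d_def by (simp add: sum_lessThan_telescope)
  have lim0: "(\<lambda>n. a 0 + (\<Sum>k<n. d k)) \<longlonglongrightarrow> L" unfolding L_def by (intro tendsto_add tendsto_const summable_LIMSEQ sd)
  have aeq: "(\<lambda>n. a 0 + (\<Sum>k<n. d k)) = a" by (rule ext, rule an[symmetric])
  have lim: "a \<longlonglongrightarrow> L" using lim0 unfolding aeq .
  have "\<bar>a n - L\<bar> \<le> B * th^n / (1 - th)" for n
  proof -
    have "a n - L = - (\<Sum>k. d (k + n))"
      unfolding L_def an[of n] using suminf_split_initial_segment[OF sd, of n] by simp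
    then have "\<bar>a n - L\<bar> = norm (\<Sum>k. d (k + n))" by simp
    also have "\<dots> \<le> (\<Sum>k. (B * th^n) * th^k)"
    proof (rule norm_suminf_le)
      show "norm (d (k + n)) \<le> B * th ^ n * th ^ k" for k using d[of "k + n"] unfolding d_def
        by (simp add: power_add mult_ac)
      show "summable (\<lambda>k. B * th ^ n * th ^ k)" using th by (intro summable_mult summable_geometric) auto
    qed
    also have "\<dots> = B * th^n / (1 - th)" using th
      by (subst suminf_mult[OF summable_geometric]) (auto simp: suminf_geometric)
    finally show ?thesis .
  qed
  with lim show ?thesis by blast
qed

lemma zero_by_geom:
  fixes y :: real
  assumes "0 \<le> th" "th < 1" "\<And>n. \<bar>y\<bar> \<le> K * th^n" shows "y = 0"
proof -
  have "(\<lambda>n. K * th^n) \<longlonglongrightarrow> K * 0" using assms by (intro tendsto_mult tendsto_const LIMSEQ_power_zero) auto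
  then have "\<bar>y\<bar> \<le> 0" using LIMSEQ_le_const[of "\<lambda>n. K * th^n" 0 "\<bar>y\<bar>"] assms(3) by auto
  then show ?thesis by simp
qed

context ifp begin

lemma Kmat_entry: "Kmat P pim beta R 1 $ z $ zh = complex_of_real (Kr z zh)"
  by (simp add: Kmat_def Kr_def)

lemma subinv:
  assumes sr: "spectral_radius (Kmat P pim beta R 1) < 1"
  shows "\<exists>v th. (\<forall>i. v i > 0) \<and> 0 \<le> th \<and> th < 1 \<and> (\<forall>i. (\<Sum>j\<in>UNIV. Kr i j * v j) \<le> th * v i)"
  by (rule subinvariant[OF Kr_nonneg]) (rule noeig_from_sr[OF Kmat_entry sr])

lemma du_inv: assumes x: "0 < x" and y: "du x z \<le> y" shows "\<exists>t. 0 < t \<and> t \<le> x \<and> du t z = y"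
proof -
  from du_at0[of z] have "eventually (\<lambda>t. y < du t z) (at_right 0)"
    unfolding filterlim_at_top_dense by blast
  then obtain b where b: "b > 0" "\<And>t. t > 0 \<Longrightarrow> t < b \<Longrightarrow> y < du t z"
    unfolding eventually_at_right_field by blast
  define t0 where "t0 = min (b/2) x"
  have t0: "0 < t0" "t0 \<le> x" "t0 < b" using b x by (auto simp: t0_def)
  have cont: "continuous_on {t0..x} (\<lambda>t. du t z)"
    by (rule continuous_on_subset[OF du_cont_on]) (use t0 in auto)
  from IVT2'[of "\<lambda>t. du t z", OF y less_imp_le[OF b(2)[OF t0(1,3)]] t0(2) cont]
  obtain t where "t \<ge> t0" "t \<le> x" "du t z = y" by blast
  then show ?thesis using t0 by (intro exI[of _ t]) auto
qed

definition duinv :: "'z \<Rightarrow> real \<Rightarrow> real" where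
  "duinv zh y = (THE t. 0 < t \<and> du t zh = y)"

lemma duinv_du: "0 < t \<Longrightarrow> duinv zh (du t zh) = t"
  unfolding duinv_def by (rule the_equality) (auto simp: du_eq_iff)

lemma iter_candC: "c \<in> candC du \<Longrightarrow> (T ^^ n) c \<in> candC du"
  by (induction n) (auto intro: Top_candC)

end

locale ifp2 = ifp +
  fixes v and th :: real
  assumes v_pos: "\<And>i. v i > 0" and th_nonneg: "0 \<le> th" and th_lt1: "th < 1"
    and Kv0: "\<And>i. (\<Sum>j\<in>UNIV. P i j * enn2real (\<integral>\<^sup>+ e. ennreal (beta i j e * R i j e powr 1) \<partial>pim) * v j) \<le> th * v i"
begin

lemma Kv: "(\<Sum>j\<in>UNIV. Kr i j * v j) \<le> th * v i"
  using Kv0[of i] unfolding Kr_def .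

lemma contr_v:
  assumes c: "c \<in> candC du" and d: "d \<in> candC du" and C: "C \<ge> 0"
    and cd: "\<And>x zh. x > 0 \<Longrightarrow> \<bar>du (c x zh) zh - du (d x zh) zh\<bar> \<le> C * v zh" and w: "w > 0"
  shows "\<bar>du (T c w z) z - du (T d w z) z\<bar> \<le> C * th * v z"
proof -
  have "\<bar>du (T c w z) z - du (T d w z) z\<bar> \<le> (\<Sum>zh\<in>UNIV. Kr z zh * (C * v zh))"
    by (rule contr[OF c d _ cd w]) (use C v_pos in \<open>auto intro: less_imp_le mult_nonneg_nonneg\<close>)
  also have "\<dots> = C * (\<Sum>zh\<in>UNIV. Kr z zh * v zh)" by (simp add: sum_distrib_left mult_ac)
  also have "\<dots> \<le> C * (th * v z)" using Kv C by (intro mult_left_mono) auto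
  finally show ?thesis by (simp add: mult_ac)
qed

definition vS where "vS = (\<Sum>zh\<in>UNIV. v zh)"

lemma v_le_vS: "v zh \<le> vS"
  unfolding vS_def by (rule member_le_sum) (auto intro: less_imp_le v_pos)

lemma init_bound:
  assumes c: "c \<in> candC du" and d: "d \<in> candC du"
  obtains C where "C \<ge> 0" "\<And>x zh. x > 0 \<Longrightarrow> \<bar>du (c x zh) zh - du (d x zh) zh\<bar> \<le> C * v zh"
proof -
  obtain M1 where M1: "M1 \<ge> 0" "\<And>w z. w > 0 \<Longrightarrow> \<bar>du (c w z) z - du w z\<bar> \<le> M1" using candC_M[OF c] by blast
  obtain M2 where M2: "M2 \<ge> 0" "\<And>w z. w > 0 \<Longrightarrow> \<bar>du (d w z) z - du w z\<bar> \<le> M2" using candC_M[OF d] by blast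
  define vm where "vm = Min (range v)"
  have vm: "vm > 0" unfolding vm_def using v_pos by (subst Min_gr_iff) auto
  have vmle: "vm \<le> v zh" for zh unfolding vm_def by (rule Min_le) auto
  define C where "C = (M1 + M2) / vm"
  show ?thesis
  proof (rule that[of C])
    show "C \<ge> 0" unfolding C_def using M1 M2 vm by simp
    fix x :: real and zh assume x: "x > 0"
    have "\<bar>du (c x zh) zh - du (d x zh) zh\<bar> \<le> M1 + M2" using M1(2)[OF x, of zh] M2(2)[OF x, of zh] by linarith
    also have "\<dots> = C * vm" unfolding C_def using vm by simp
    also have "\<dots> \<le> C * v zh" using vmle \<open>C \<ge> 0\<close> by (intro mult_left_mono) auto
    finally show "\<bar>du (c x zh) zh - du (d x zh) zh\<bar> \<le> C * v zh" .
  qed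
qed

lemma iter_bound:
  assumes c: "c \<in> candC du" and d: "d \<in> candC du" and C: "C \<ge> 0"
    and cd: "\<And>x zh. x > 0 \<Longrightarrow> \<bar>du (c x zh) zh - du (d x zh) zh\<bar> \<le> C * v zh"
  shows "x > 0 \<Longrightarrow> \<bar>du ((T ^^ n) c x zh) zh - du ((T ^^ n) d x zh) zh\<bar> \<le> C * th^n * v zh"
proof (induction n arbitrary: x zh)
  case 0 then show ?case using cd by simp
next
  case (Suc n)
  have "\<bar>du (T ((T ^^ n) c) x zh) zh - du (T ((T ^^ n) d) x zh) zh\<bar> \<le> (C * th^n) * th * v zh"
    by (rule contr_v[OF iter_candC[OF c] iter_candC[OF d] _ Suc.IH Suc.prems]) (use C th_nonneg in auto)
  then show ?case by (simp add: mult_ac)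
qed

end

context ifp2 begin

definition cn where "cn n = (T ^^ n) (\<lambda>x z. x)"

lemma cn_candC: "cn n \<in> candC du" unfolding cn_def by (rule iter_candC[OF id_candC])

lemma cn_Suc: "cn (Suc n) = (T ^^ n) (T (\<lambda>x z. x))" unfolding cn_def by (simp only: funpow_Suc_right comp_def)

lemma cn_Suc': "cn (Suc n) = T (cn n)" unfolding cn_def by simp

definition C0 where "C0 = (SOME C. C \<ge> 0 \<and> (\<forall>x zh. x > 0 \<longrightarrow> \<bar>du (T (\<lambda>x z. x) x zh) zh - du x zh\<bar> \<le> C * v zh))"

lemma C0: "C0 \<ge> 0" "\<And>x zh. x > 0 \<Longrightarrow> \<bar>du (T (\<lambda>x z. x) x zh) zh - du x zh\<bar> \<le> C0 * v zh"
proof -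
  obtain C where "C \<ge> 0" "\<And>x zh. x > 0 \<Longrightarrow> \<bar>du (T (\<lambda>x z. x) x zh) zh - du x zh\<bar> \<le> C * v zh"
    using init_bound[OF Top_candC[OF id_candC] id_candC] by blast
  then have "\<exists>C. C \<ge> 0 \<and> (\<forall>x zh. x > 0 \<longrightarrow> \<bar>du (T (\<lambda>x z. x) x zh) zh - du x zh\<bar> \<le> C * v zh)" by blast
  from someI_ex[OF this] show "C0 \<ge> 0" "\<And>x zh. x > 0 \<Longrightarrow> \<bar>du (T (\<lambda>x z. x) x zh) zh - du x zh\<bar> \<le> C0 * v zh"
    unfolding C0_def by blast+
qed

lemma cn_step: assumes x: "x > 0" shows "\<bar>du (cn (Suc n) x zh) zh - du (cn n x zh) zh\<bar> \<le> C0 * v zh * th^n"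
proof -
  have X: "\<bar>du ((T ^^ n) (T (\<lambda>x z. x)) x zh) zh - du ((T ^^ n) (\<lambda>x z. x) x zh) zh\<bar> \<le> C0 * th^n * v zh"
    by (rule iter_bound[OF Top_candC[OF id_candC] id_candC C0(1) C0(2) x])
  from X have "\<bar>du (cn (Suc n) x zh) zh - du (cn n x zh) zh\<bar> \<le> C0 * th^n * v zh"
    by (simp only: cn_Suc cn_def[of n])
  then show ?thesis by (simp add: mult_ac)
qed

lemma cn_conv: "x > 0 \<Longrightarrow> \<exists>L. (\<lambda>n. du (cn n x zh) zh) \<longlonglongrightarrow> L \<and>
    (\<forall>n. \<bar>du (cn n x zh) zh - L\<bar> \<le> C0 * v zh * th^n / (1 - th))"
  by (rule geom_conv[OF th_nonneg th_lt1]) (rule cn_step)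

definition g where "g x zh = lim (\<lambda>n. du (cn n x zh) zh)"

lemma g_lim: "x > 0 \<Longrightarrow> (\<lambda>n. du (cn n x zh) zh) \<longlonglongrightarrow> g x zh"
  using cn_conv[of x zh] unfolding g_def by (metis limI)

lemma g_bound: "x > 0 \<Longrightarrow> \<bar>du (cn n x zh) zh - g x zh\<bar> \<le> C0 * v zh * th^n / (1 - th)"
  using cn_conv[of x zh] g_lim[of x zh] LIMSEQ_unique by metis

lemma g_ge: assumes x: "x > 0" shows "du x zh \<le> g x zh"
proof (rule LIMSEQ_le_const[OF g_lim[OF x]])
  show "\<exists>N. \<forall>n\<ge>N. du x zh \<le> du (cn n x zh) zh"
    using candC_D(3,4)[OF cn_candC] x by (intro exI[of _ 0] allI impI du_le) auto
qed

lemma g_anti: assumes x: "0 < x1" "x1 \<le> x2" shows "g x2 zh \<le> g x1 zh"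
proof (rule LIMSEQ_le[OF g_lim g_lim])
  show "\<exists>N. \<forall>n\<ge>N. du (cn n x2 zh) zh \<le> du (cn n x1 zh) zh"
    using candC_D(3)[OF cn_candC] candC_mono[OF cn_candC] x by (intro exI[of _ 0] allI impI du_le) auto
qed (use x in auto)

lemma g_cont: "continuous_on {0<..} (\<lambda>x. g x zh)"
  unfolding continuous_on_iff
proof (intro ballI allI impI)
  fix x e :: real assume x: "x \<in> {0<..}" and e: "0 < e"
  have "(\<lambda>n. C0 * v zh * th^n / (1 - th)) \<longlonglongrightarrow> C0 * v zh * 0 / (1 - th)"
    using th_nonneg th_lt1 by (intro tendsto_intros LIMSEQ_power_zero) auto
  then have "eventually (\<lambda>n. C0 * v zh * th^n / (1 - th) < e/3) sequentially"
    using e by (intro order_tendstoD(2)) auto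
  then obtain n where n: "C0 * v zh * th^n / (1 - th) < e/3" by (auto simp: eventually_sequentially)
  from duc_cont_on[OF cn_candC, of n zh] x e obtain d where d: "d > 0"
    "\<And>x'. x' \<in> {0<..} \<Longrightarrow> dist x' x < d \<Longrightarrow> dist (du (cn n x' zh) zh) (du (cn n x zh) zh) < e/3"
    unfolding continuous_on_iff by (metis divide_pos_pos zero_less_numeral)
  show "\<exists>d>0. \<forall>x'\<in>{0<..}. dist x' x < d \<longrightarrow> dist (g x' zh) (g x zh) < e"
  proof (intro exI[of _ d] conjI ballI impI d(1))
    fix x' assume x': "x' \<in> {0<..}" "dist x' x < d"
    have 1: "\<bar>du (cn n x' zh) zh - g x' zh\<bar> < e/3" using x' by (intro order.strict_trans1[OF g_bound n]) auto
    have 2: "\<bar>du (cn n x zh) zh - g x zh\<bar> < e/3" using x by (intro order.strict_trans1[OF g_bound n]) auto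
    have 3: "\<bar>du (cn n x' zh) zh - du (cn n x zh) zh\<bar> < e/3" using d(2)[OF x'] by (simp add: dist_real_def)
    show "dist (g x' zh) (g x zh) < e" using 1 2 3 unfolding dist_real_def by (simp add: abs_less_iff; linarith)
  qed
qed

definition cs where "cs x zh = duinv zh (g x zh)"

lemma cs_prop: assumes x: "x > 0" shows "0 < cs x zh" "cs x zh \<le> x" "du (cs x zh) zh = g x zh"
proof -
  from du_inv[OF x g_ge[OF x]] obtain t where t: "0 < t" "t \<le> x" "du t zh = g x zh" by blast
  then have "cs x zh = t" unfolding cs_def using duinv_du[OF t(1)] by metis
  with t show "0 < cs x zh" "cs x zh \<le> x" "du (cs x zh) zh = g x zh" by auto
qed

lemma cs_cont: "continuous_on {0<..} (\<lambda>x. cs x zh)"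
proof -
  have "isCont (\<lambda>x. cs x zh) x" if x: "x > 0" for x
  proof -
    have gc: "isCont (\<lambda>x. g x zh) x" using g_cont[of zh] x by (simp add: continuous_on_eq_continuous_at)
    define t where "t = cs x zh"
    have t: "t > 0" "du t zh = g x zh" using cs_prop[OF x] unfolding t_def by auto
    have "isCont (duinv zh) (du t zh)"
    proof (rule isCont_inverse_function[where d="t/2" and x=t and f="\<lambda>x. du x zh" and g="duinv zh"])
      show "0 < t/2" using t by simp
      fix z assume "\<bar>z - t\<bar> \<le> t/2"
      then have z: "z > 0" using t by linarith
      show "duinv zh (du z zh) = z" by (rule duinv_du[OF z])
      show "isCont (\<lambda>x. du x zh) z" by (rule du_cont[OF z])
    qed
    then have "isCont (duinv zh) (g x zh)" using t by simp
    from isCont_o2[OF gc this] show ?thesis unfolding cs_def .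
  qed
  then show ?thesis by (simp add: continuous_on_eq_continuous_at)
qed

lemma cs_candC: "cs \<in> candC du"
proof -
  have 1: "\<forall>z. continuous_on {0<..} (\<lambda>w. cs w z)" using cs_cont by blast
  have 2: "\<forall>z. mono_on {0<..} (\<lambda>w. cs w z)"
  proof (intro allI mono_onI)
    fix z and x1 x2 :: real assume x: "x1 \<in> {0<..}" "x2 \<in> {0<..}" "x1 \<le> x2"
    have "du (cs x2 z) z \<le> du (cs x1 z) z" using cs_prop(3) g_anti x by auto
    then show "cs x1 z \<le> cs x2 z" using du_le_iff cs_prop(1) x by auto
  qed
  have 3: "\<forall>w z. w > 0 \<longrightarrow> 0 < cs w z \<and> cs w z \<le> w" using cs_prop by blast
  have 4: "\<forall>w z. 0 < w \<longrightarrow> \<bar>du (cs w z) z - du w z\<bar> \<le> C0 * vS / (1 - th)"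
  proof (intro allI impI)
    fix w :: real and z assume w: "w > 0"
    have "\<bar>du (cn 0 w z) z - g w z\<bar> \<le> C0 * v z * th^0 / (1 - th)" by (rule g_bound[OF w])
    then have "\<bar>du (cs w z) z - du w z\<bar> \<le> C0 * v z / (1 - th)" using cs_prop(3)[OF w] by (simp add: cn_def)
    also have "\<dots> \<le> C0 * vS / (1 - th)" using v_le_vS C0(1) th_lt1
      by (intro divide_right_mono mult_left_mono) auto
    finally show "\<bar>du (cs w z) z - du w z\<bar> \<le> C0 * vS / (1 - th)" .
  qed
  show ?thesis unfolding candC_def using 1 2 3 4 by blast
qed

lemma cn_to_cs: "x > 0 \<Longrightarrow> \<bar>du (cn n x zh) zh - du (cs x zh) zh\<bar> \<le> (C0 * th^n / (1 - th)) * v zh"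
  using g_bound[of x n zh] cs_prop(3)[of x zh] by (simp add: mult_ac)

lemma cs_fixed: assumes x: "x > 0" shows "T cs x zh = cs x zh"
proof -
  have "\<bar>du (T cs x zh) zh - du (cs x zh) zh\<bar> \<le> (2 * C0 * v zh * th / (1 - th)) * th^n" for n
  proof -
    have C: "C0 * th^n / (1 - th) \<ge> 0" using C0(1) th_nonneg th_lt1 by simp
    have a: "\<bar>du (T cs x zh) zh - du (T (cn n) x zh) zh\<bar> \<le> (C0 * th^n / (1 - th)) * th * v zh"
      by (rule contr_v[OF cs_candC cn_candC C _ x]) (use cn_to_cs in \<open>simp add: abs_minus_commute\<close>)
    have b: "\<bar>du (cn (Suc n) x zh) zh - du (cs x zh) zh\<bar> \<le> (C0 * th^Suc n / (1 - th)) * v zh"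
      by (rule cn_to_cs[OF x])
    have "\<bar>du (T cs x zh) zh - du (cs x zh) zh\<bar> \<le> (C0 * th^n / (1 - th)) * th * v zh + (C0 * th^Suc n / (1 - th)) * v zh"
      using a b unfolding cn_Suc' by linarith
    also have "\<dots> = (2 * C0 * v zh * th / (1 - th)) * th^n" by (simp add: field_simps)
    finally show ?thesis .
  qed
  then have "du (T cs x zh) zh - du (cs x zh) zh = 0" by (intro zero_by_geom[OF th_nonneg th_lt1])
  then have eq: "du (T cs x zh) zh = du (cs x zh) zh" by linarith
  show ?thesis by (rule iffD1[OF du_eq_iff[OF Top_prop(1)[OF cs_candC x, of zh] cs_prop(1)[OF x, of zh]] eq])
qed

lemma cs_unique:
  assumes c: "c \<in> candC du" and fx: "\<And>w z. w > 0 \<Longrightarrow> T c w z = c w z" and x: "x > 0"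
  shows "c x zh = cs x zh"
proof -
  obtain C where C: "C \<ge> 0" "\<And>x zh. x > 0 \<Longrightarrow> \<bar>du (c x zh) zh - du (cs x zh) zh\<bar> \<le> C * v zh"
    using init_bound[OF c cs_candC] by blast
  have bnd: "\<bar>du (c x zh) zh - du (cs x zh) zh\<bar> \<le> C * th^n * v zh" if "x > 0" for n x zh
    using that
  proof (induction n arbitrary: x zh)
    case 0 then show ?case using C by simp
  next
    case (Suc n)
    have "\<bar>du (T c x zh) zh - du (T cs x zh) zh\<bar> \<le> (C * th^n) * th * v zh"
      by (rule contr_v[OF c cs_candC _ Suc.IH Suc.prems]) (use C th_nonneg in auto)
    then show ?case using fx[OF Suc.prems] cs_fixed[OF Suc.prems] by (simp add: mult_ac)
  qed
  have "du (c x zh) zh - du (cs x zh) zh = 0"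
    by (rule zero_by_geom[OF th_nonneg th_lt1, of _ "C * v zh"]) (use bnd[OF x] in \<open>simp add: mult_ac\<close>)
  then have eq: "du (c x zh) zh = du (cs x zh) zh" by linarith
  show ?thesis by (rule iffD1[OF du_eq_iff[OF candC_D(3)[OF c x, of zh] cs_prop(1)[OF x, of zh]] eq])
qed

lemma cs_conv: assumes c: "c \<in> candC du" shows "(\<lambda>k. rho du ((T ^^ k) c) cs) \<longlonglongrightarrow> 0"
proof -
  obtain C where C: "C \<ge> 0" "\<And>x zh. x > 0 \<Longrightarrow> \<bar>du (c x zh) zh - du (cs x zh) zh\<bar> \<le> C * v zh"
    using init_bound[OF c cs_candC] by blast
  have bnd: "\<bar>du ((T ^^ n) c x zh) zh - du (cs x zh) zh\<bar> \<le> C * th^n * v zh" if "x > 0" for n x zh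
    using that
  proof (induction n arbitrary: x zh)
    case 0 then show ?case using C by simp
  next
    case (Suc n)
    have h: "\<bar>du (T ((T ^^ n) c) x zh) zh - du (T cs x zh) zh\<bar> \<le> (C * th^n) * th * v zh"
      by (rule contr_v[OF iter_candC[OF c] cs_candC _ Suc.IH Suc.prems]) (use C th_nonneg in auto)
    have e1: "(T ^^ Suc n) c = T ((T ^^ n) c)" by simp
    have e2: "T cs x zh = cs x zh" by (rule cs_fixed[OF Suc.prems])
    have e3: "(C * th^n) * th * v zh = C * th^Suc n * v zh" by (simp add: mult_ac)
    show ?case using h unfolding e1 e2 e3 .
  qed
  have bnd2: "\<bar>du ((T ^^ k) c w z) z - du (cs w z) z\<bar> \<le> C * vS * th^k" if "w > 0" for k w z
  proof -
    have "C * th^k * v z \<le> C * th^k * vS" using C(1) th_nonneg v_le_vS by (intro mult_left_mono) auto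
    with bnd[OF that, of k z] show ?thesis by (simp add: mult_ac)
  qed
  have ne: "{0<..} \<times> UNIV \<noteq> ({} :: (real \<times> _) set)" using gt_ex[of "0::real"] by auto
  have ub: "rho du ((T ^^ k) c) cs \<le> C * vS * th^k" for k
    unfolding rho_def by (rule cSUP_least[OF ne]) (auto simp: mem_Times_iff intro!: bnd2)
  have lb: "0 \<le> rho du ((T ^^ k) c) cs" for k
    unfolding rho_def
    by (rule cSUP_upper2[where x="(1, undefined)"], rule bdd_aboveI2[where M="C * vS * th^k"])
      (auto simp: mem_Times_iff intro!: bnd2)
  have lim: "(\<lambda>k. C * vS * th^k) \<longlonglongrightarrow> C * vS * 0"
    using th_nonneg th_lt1 by (intro tendsto_intros LIMSEQ_power_zero) auto
  show ?thesis
  proof (rule tendsto_sandwich[of "\<lambda>_. 0" _ _ "\<lambda>k. C * vS * th^k"])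
    show "eventually (\<lambda>k. 0 \<le> rho du ((T ^^ k) c) cs) sequentially" using lb by simp
    show "eventually (\<lambda>k. rho du ((T ^^ k) c) cs \<le> C * vS * th^k) sequentially" using ub by simp
    show "(\<lambda>k. C * vS * th^k) \<longlonglongrightarrow> 0" using lim by simp
  qed simp
qed

end

theorem theorem2p1:
  fixes P :: "'z::finite \<Rightarrow> 'z \<Rightarrow> real"
    and pim :: "'e measure"
    and beta R Y :: "'z \<Rightarrow> 'z \<Rightarrow> 'e \<Rightarrow> real"
    and u du ddu :: "real \<Rightarrow> 'z \<Rightarrow> real"
  assumes P_nonneg: "\<And>z zh. P z zh \<ge> 0"
    and P_stoch: "\<And>z. (\<Sum>zh\<in>UNIV. P z zh) = 1"
    and pi_prob: "prob_space pim"
    and beta_meas: "\<And>z zh. beta z zh \<in> borel_measurable pim"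
    and R_meas: "\<And>z zh. R z zh \<in> borel_measurable pim"
    and Y_meas: "\<And>z zh. Y z zh \<in> borel_measurable pim"
    and beta_nonneg: "\<And>z zh e. beta z zh e \<ge> 0"
    and R_nonneg: "\<And>z zh e. R z zh e \<ge> 0"
    and Y_nonneg: "\<And>z zh e. Y z zh e \<ge> 0"
    \<comment> \<open>Assumption 1\<close>
    and u_deriv: "\<And>c z. c > 0 \<Longrightarrow> ((\<lambda>x. u x z) has_real_derivative du c z) (at c)"
    and du_deriv: "\<And>c z. c > 0 \<Longrightarrow> ((\<lambda>x. du x z) has_real_derivative ddu c z) (at c)"
    and du_pos: "\<And>c z. c > 0 \<Longrightarrow> du c z > 0"
    and ddu_neg: "\<And>c z. c > 0 \<Longrightarrow> ddu c z < 0"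
    and du_at0: "\<And>z. filterlim (\<lambda>c. du c z) at_top (at_right 0)"
    and du_atinf: "\<And>z. \<exists>L. ((\<lambda>c. du c z) \<longlongrightarrow> L) at_top \<and> L < 1"
    \<comment> \<open>Assumption 2(a)\<close>
    and A2a1: "\<And>z. cexp P pim z (\<lambda>zh e. ext_mu du (Y z zh e) zh) < \<infinity>"
    and A2a2: "\<And>z. cexp P pim z (\<lambda>zh e. ennreal (beta z zh e * R z zh e) * ext_mu du (Y z zh e) zh) < \<infinity>"
    \<comment> \<open>Assumption 2(b): K(1) has finite entries and spectral radius < 1\<close>
    and K_fin: "\<And>z zh. P z zh > 0 \<Longrightarrow> (\<integral>\<^sup>+ e. ennreal (beta z zh e * R z zh e powr 1) \<partial>pim) < \<infinity>"
    and A2b: "spectral_radius (Kmat P pim beta R 1) < 1"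
  shows "(\<forall>c\<in>candC du. \<forall>w>0. \<forall>z. \<exists>!xi. 0 < xi \<and> xi \<le> w \<and> euler_eq P pim beta R Y du c w z xi)
    \<and> (\<forall>c\<in>candC du. Top P pim beta R Y du c \<in> candC du)
    \<and> (\<exists>cs\<in>candC du.
          (\<forall>w>0. \<forall>z. Top P pim beta R Y du cs w z = cs w z)
        \<and> (\<forall>c\<in>candC du. (\<forall>w>0. \<forall>z. Top P pim beta R Y du c w z = c w z) \<longrightarrow> (\<forall>w>0. \<forall>z. c w z = cs w z))
        \<and> (\<forall>c\<in>candC du. (\<lambda>k. rho du ((Top P pim beta R Y du ^^ k) c) cs) \<longlonglongrightarrow> 0))"
proof -
  interpret I: ifp P pim beta R Y du ddu
    apply unfold_locales
    apply (fact P_nonneg)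
    apply (fact beta_meas)
    apply (fact R_meas)
    apply (fact Y_meas)
    apply (fact beta_nonneg)
    apply (fact R_nonneg)
    apply (fact Y_nonneg)
    apply (fact du_deriv)
    apply (fact du_pos)
    apply (fact ddu_neg)
    apply (fact du_at0)
    apply (fact A2a2)
    apply (fact K_fin)
    done
  obtain v th where vth: "\<forall>i. v i > 0" "0 \<le> th" "th < 1" "\<forall>i. (\<Sum>j\<in>UNIV. I.Kr i j * v j) \<le> th * v i"
    using I.subinv[OF A2b] by blast
  interpret J: ifp2 P pim beta R Y du ddu v th
    by unfold_locales (use vth in \<open>auto simp: I.Kr_def\<close>)
  have 1: "\<forall>c\<in>candC du. \<forall>w>0. \<forall>z. \<exists>!xi. 0 < xi \<and> xi \<le> w \<and> euler_eq P pim beta R Y du c w z xi"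
    using I.Top_ex1 by blast
  have 2: "\<forall>c\<in>candC du. Top P pim beta R Y du c \<in> candC du"
    using I.Top_candC by blast
  have 3: "\<exists>cs\<in>candC du.
          (\<forall>w>0. \<forall>z. Top P pim beta R Y du cs w z = cs w z)
        \<and> (\<forall>c\<in>candC du. (\<forall>w>0. \<forall>z. Top P pim beta R Y du c w z = c w z) \<longrightarrow> (\<forall>w>0. \<forall>z. c w z = cs w z))
        \<and> (\<forall>c\<in>candC du. (\<lambda>k. rho du ((Top P pim beta R Y du ^^ k) c) cs) \<longlonglongrightarrow> 0)"
  proof (rule bexI[OF _ J.cs_candC], intro conjI ballI allI impI)
    show "Top P pim beta R Y du J.cs w z = J.cs w z" if "w > 0" for w z using J.cs_fixed[OF that] .
    show "c w z = J.cs w z" if "c \<in> candC du" "\<forall>w>0. \<forall>z. Top P pim beta R Y du c w z = c w z" "w > 0" for c w z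
      using J.cs_unique[OF that(1) _ that(3)] that(2) by blast
    show "(\<lambda>k. rho du ((Top P pim beta R Y du ^^ k) c) J.cs) \<longlonglongrightarrow> 0" if "c \<in> candC du" for c
      using J.cs_conv[OF that] .
  qed
  show ?thesis using 1 2 3 by blast
qed


end
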